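(* $\mathsf{AP}(R_5,R_5)=\operatorname{Pol}(R_5,R'_5)=\mathsf{L}$.
   Context: Tuples in $\{0,1\}^4$ are written as strings $abcd$. The relations $R_1,\dots,R_5\subseteq\{0,1\}^4$ are $R_1=\{0000,1000,0100,1100,1010,0110,1001,0101,0011,1011,0111,1111\}$, $R_2=\{0000,1000,0100,1100,1010,0101,0011,1111\}$, $R_3=\{0000,1100,1010,0101,0011,1011,0111,1111\}$, $R_4=\{0000,1100,1010,0101,0011,1111\}$, $R_5=\{0000,1100,1010,0110,1001,0101,0011,1111\}$. For $R,S\subseteq\{0,1\}^4$, a Boolean function $f\colon\{0,1\}^n\to\{0,1\}$ is analogy-preserving relative to $(R,S)$ if for all $\mathbf{a},\mathbf{b},\mathbf{c},\mathbf{d}\in\{0,1\}^n$ with $(a_i,b_i,c_i,d_i)\in R$ for every $i$ and such that $(f(\mathbf{a}),f(\mathbf{b}),f(\mathbf{c}),x)\in S$ for some $x\in\{0,1\}$, we have $(f(\mathbf{a}),f(\mathbf{b}),f(\mathbf{c}),f(\mathbf{d}))\in S$; $\mathsf{AP}(R,S)$ is the set of all such functions of all arities. $S':=S\cup\{(a,b,c,d)\mid\nexists x\colon(a,b,c,x)\in S\}$, and $\operatorname{Pol}(R,S)$ is the set of Boolean functions $f$ with $f(\mathbf{a}_1,\dots,\mathbf{a}_n)\in S$ (componentwise) for all $\mathbf{a}_1,\dots,\mathbf{a}_n\in R$. $\mathsf{L}$ is the set of affine Boolean functions $f(x_1,\dots,x_n)=c+a_1x_1+\dots+a_nx_n\pmod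 2$ with $c,a_i\in\{0,1\}$. *)

theory Defs
  imports Main
begin

text \<open>Boolean values: 0 = False, 1 = True. A 4-tuple abcd is (a,b,c,d).
 A Boolean function of arity n is a function f on bool lists, only evaluated
 on lists of length n.\<close>

type_synonym tup4 = "bool \<times> bool \<times> bool \<times> bool"

definition R5 :: "tup4 set" where
  "R5 = {(False,False,False,False), (True,True,False,False), (True,False,True,False),
         (False,True,True,False), (True,False,False,True), (False,True,False,True),
         (False,False,True,True), (True,True,True,True)}"

definition AP :: "tup4 set \<Rightarrow> tup4 set \<Rightarrow> nat \<Rightarrow> (bool list \<Rightarrow> bool) \<Rightarrow> bool" where
  "AP R S n f \<longleftrightarrow>
     (\<forall>a b c d. length a = n \<longrightarrow> length b = n \<longrightarrow> length c = n \<longrightarrow> length d = n \<longrightarrow>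
        (\<forall>i<n. (a!i, b!i, c!i, d!i) \<in> R) \<longrightarrow>
        (\<exists>x. (f a, f b, f c, x) \<in> S) \<longrightarrow>
        (f a, f b, f c, f d) \<in> S)"

definition completion :: "tup4 set \<Rightarrow> tup4 set" where
  "completion S = S \<union> {(a,b,c,d). \<not> (\<exists>x. (a,b,c,x) \<in> S)}"

definition Pol :: "tup4 set \<Rightarrow> tup4 set \<Rightarrow> nat \<Rightarrow> (bool list \<Rightarrow> bool) \<Rightarrow> bool" where
  "Pol R S n f \<longleftrightarrow>
     (\<forall>ts. length ts = n \<longrightarrow> set ts \<subseteq> R \<longrightarrow>
        (f (map (\<lambda>(a,b,c,d). a) ts), f (map (\<lambda>(a,b,c,d). b) ts),
         f (map (\<lambda>(a,b,c,d). c) ts), f (map (\<lambda>(a,b,c,d). d) ts)) \<in> S)"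

definition xsum :: "bool list \<Rightarrow> bool" where
  "xsum xs = foldr (\<noteq>) xs False"

definition affine :: "nat \<Rightarrow> (bool list \<Rightarrow> bool) \<Rightarrow> bool" where
  "affine n f \<longleftrightarrow> (\<exists>c as. length as = n \<and>
      (\<forall>x. length x = n \<longrightarrow> f x = (c \<noteq> xsum (map2 (\<and>) as x))))"

end

theory Submission
  imports Defs
begin

fun x3 :: "bool list \<Rightarrow> bool list \<Rightarrow> bool list \<Rightarrow> bool list" where
  "x3 (x#xs) (y#ys) (z#zs) = (x \<noteq> (y \<noteq> z)) # x3 xs ys zs"
| "x3 _ _ _ = []"

lemma x3_len: "length a = n \<Longrightarrow> length b = n \<Longrightarrow> length c = n \<Longrightarrow> length (x3 a b c) = n"
  by (induction a b c arbitrary: n rule: x3.induct) auto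

lemma x3_nth: "length a = n \<Longrightarrow> length b = n \<Longrightarrow> length c = n \<Longrightarrow> i < n \<Longrightarrow>
   x3 a b c ! i = (a!i \<noteq> (b!i \<noteq> c!i))"
  by (induction a b c arbitrary: n i rule: x3.induct) (auto simp: nth_Cons split: nat.splits)

definition Q :: "nat \<Rightarrow> (bool list \<Rightarrow> bool) \<Rightarrow> bool" where
  "Q n f \<longleftrightarrow> (\<forall>a b c. length a = n \<longrightarrow> length b = n \<longrightarrow> length c = n \<longrightarrow>
      f (x3 a b c) = (f a \<noteq> (f b \<noteq> f c)))"

lemma R5_iff: "((a,b,c,d) \<in> R5) = (d = (a \<noteq> (b \<noteq> c)))"
  unfolding R5_def by (cases a; cases b; cases c; cases d) auto

lemma compl: "completion R5 = R5"
  unfolding completion_def by (auto simp: R5_iff)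

lemma AP_Q: "AP R5 R5 n f \<longleftrightarrow> Q n f"
proof
  assume H: "AP R5 R5 n f"
  show "Q n f" unfolding Q_def
  proof (intro allI impI)
    fix a b c :: "bool list" assume l: "length a = n" "length b = n" "length c = n"
    have lx: "length (x3 a b c) = n" using l by (rule x3_len)
    have r: "\<And>i. i<n \<Longrightarrow> (a!i, b!i, c!i, x3 a b c ! i) \<in> R5"
      using l by (simp add: R5_iff x3_nth)
    have ex: "\<exists>x. (f a, f b, f c, x) \<in> R5" by (simp add: R5_iff)
    have "(f a, f b, f c, f (x3 a b c)) \<in> R5"
      using H[unfolded AP_def, rule_format, OF l lx r ex] .
    thus "f (x3 a b c) = (f a \<noteq> (f b \<noteq> f c))" by (simp add: R5_iff)
  qed
next
  assume H: "Q n f"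
  show "AP R5 R5 n f" unfolding AP_def
  proof (intro allI impI)
    fix a b c d :: "bool list"
    assume l: "length a = n" "length b = n" "length c = n" "length d = n"
      and r: "\<forall>i<n. (a!i, b!i, c!i, d!i) \<in> R5"
    have "d = x3 a b c"
      by (rule nth_equalityI) (use l r in \<open>auto simp: x3_len x3_nth R5_iff\<close>)
    thus "(f a, f b, f c, f d) \<in> R5" using H l unfolding Q_def by (simp add: R5_iff)
  qed
qed

lemma Pol_Q: "Pol R5 R5 n f \<longleftrightarrow> Q n f"
proof
  assume H: "Pol R5 R5 n f"
  show "Q n f" unfolding Q_def
  proof (intro allI impI)
    fix a b c :: "bool list" assume l: "length a = n" "length b = n" "length c = n"
    define ts where "ts = map (\<lambda>i. (a!i, b!i, c!i, a!i \<noteq> (b!i \<noteq> c!i))) [0..<n]"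
    have "length ts = n" "set ts \<subseteq> R5" unfolding ts_def by (auto simp: R5_iff)
    with H have P: "(f (map (\<lambda>(a,b,c,d). a) ts), f (map (\<lambda>(a,b,c,d). b) ts),
         f (map (\<lambda>(a,b,c,d). c) ts), f (map (\<lambda>(a,b,c,d). d) ts)) \<in> R5"
      unfolding Pol_def by blast
    have e1: "map (\<lambda>(a,b,c,d). a) ts = a" unfolding ts_def
      by (rule nth_equalityI) (use l in auto)
    have e2: "map (\<lambda>(a,b,c,d). b) ts = b" unfolding ts_def
      by (rule nth_equalityI) (use l in auto)
    have e3: "map (\<lambda>(a,b,c,d). c) ts = c" unfolding ts_def
      by (rule nth_equalityI) (use l in auto)
    have e4: "map (\<lambda>(a,b,c,d). d) ts = x3 a b c" unfolding ts_def
      by (rule nth_equalityI) (use l in \<open>auto simp: x3_len x3_nth\<close>)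
    show "f (x3 a b c) = (f a \<noteq> (f b \<noteq> f c))" using P e1 e2 e3 e4 by (simp add: R5_iff)
  qed
next
  assume H: "Q n f"
  show "Pol R5 R5 n f" unfolding Pol_def
  proof (intro allI impI)
    fix ts :: "tup4 list" assume l: "length ts = n" and s: "set ts \<subseteq> R5"
    let ?a = "map (\<lambda>(a,b,c,d). a) ts" and ?b = "map (\<lambda>(a,b,c,d). b) ts"
    let ?c = "map (\<lambda>(a,b,c,d). c) ts" and ?d = "map (\<lambda>(a,b,c,d). d) ts"
    have "?d = x3 ?a ?b ?c"
    proof (rule nth_equalityI)
      show "length ?d = length (x3 ?a ?b ?c)" using l by (simp add: x3_len)
    next
      fix i assume i: "i < length ?d"
      then have "ts ! i \<in> R5" using s by (auto dest!: nth_mem)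
      then show "?d ! i = x3 ?a ?b ?c ! i" using i l
        by (cases "ts!i") (auto simp: x3_nth R5_iff)
    qed
    then show "(f ?a, f ?b, f ?c, f ?d) \<in> R5" using H l unfolding Q_def by (simp add: R5_iff)
  qed
qed

lemma xsum_Cons: "xsum (a # l) = (a \<noteq> xsum l)" unfolding xsum_def by (simp only: foldr_Cons comp_apply)
lemma xsum_Nil: "xsum [] = False" unfolding xsum_def by (simp only: foldr_Nil id_apply)

lemma S_lin: "length as = length a \<Longrightarrow> length b = length a \<Longrightarrow> length c = length a \<Longrightarrow>
  xsum (map2 (\<and>) as (x3 a b c)) = (xsum (map2 (\<and>) as a) \<noteq> (xsum (map2 (\<and>) as b) \<noteq> xsum (map2 (\<and>) as c)))"
proof (induction as arbitrary: a b c)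
  case Nil
  then show ?case by (simp add: xsum_Nil)
next
  case (Cons k ks)
  obtain x xs where a: "a = x # xs" using Cons.prems by (cases a) auto
  obtain y ys where b: "b = y # ys" using Cons.prems a by (cases b) auto
  obtain z zs where c: "c = z # zs" using Cons.prems a by (cases c) auto
  have l: "length ks = length xs" "length ys = length xs" "length zs = length xs"
    using Cons.prems a b c by auto
  have IH: "xsum (map2 (\<and>) ks (x3 xs ys zs)) = (xsum (map2 (\<and>) ks xs) \<noteq> (xsum (map2 (\<and>) ks ys) \<noteq> xsum (map2 (\<and>) ks zs)))"
    by (rule Cons.IH[OF l])
  show ?case unfolding a b c using IH
    by (simp only: x3.simps list.map zip_Cons_Cons prod.case xsum_Cons) argo
qed

lemma S_zero: "xsum (map2 (\<and>) as (replicate m False)) = False"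
proof (induction as arbitrary: m)
  case (Cons a as)
  then show ?case by (cases m) (auto simp: xsum_Cons xsum_Nil)
qed (simp add: xsum_Cons xsum_Nil)

lemma aff_Q: "affine n f \<Longrightarrow> Q n f"
proof -
  assume "affine n f"
  then obtain c as where l: "length as = n" and h: "\<forall>x. length x = n \<longrightarrow> f x = (c \<noteq> xsum (map2 (\<and>) as x))"
    unfolding affine_def by blast
  show "Q n f" unfolding Q_def
  proof (intro allI impI)
    fix a b d :: "bool list" assume la: "length a = n" "length b = n" "length d = n"
    have "f (x3 a b d) = (c \<noteq> xsum (map2 (\<and>) as (x3 a b d)))" using h la x3_len by blast
    also have "xsum (map2 (\<and>) as (x3 a b d)) = (xsum (map2 (\<and>) as a) \<noteq> (xsum (map2 (\<and>) as b) \<noteq> xsum (map2 (\<and>) as d)))"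
      using S_lin l la by simp
    finally have e: "f (x3 a b d) = (c \<noteq> (xsum (map2 (\<and>) as a) \<noteq> (xsum (map2 (\<and>) as b) \<noteq> xsum (map2 (\<and>) as d))))" .
    have "f a = (c \<noteq> xsum (map2 (\<and>) as a))" "f b = (c \<noteq> xsum (map2 (\<and>) as b))" "f d = (c \<noteq> xsum (map2 (\<and>) as d))"
      using h la by blast+
    with e show "f (x3 a b d) = (f a \<noteq> (f b \<noteq> f d))" by argo
  qed
qed

lemma x3_zero: "length xs = n \<Longrightarrow> x3 (replicate n False) xs (replicate n False) = xs"
  by (induction xs arbitrary: n) (auto)

lemma Q_aff: "Q n f \<Longrightarrow> affine n f"
proof (induction n arbitrary: f)
  case 0
  show ?case unfolding affine_def
    by (rule exI[of _ "f []"], rule exI[of _ "[]"]) (auto simp: xsum_Cons xsum_Nil)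
next
  case (Suc n)
  define f0 where "f0 = (\<lambda>xs. f (False # xs))"
  have "Q n f0" using Suc.prems unfolding Q_def f0_def
  proof (intro allI impI)
    fix a b c :: "bool list"
    assume H: "\<forall>a b c. length a = Suc n \<longrightarrow> length b = Suc n \<longrightarrow> length c = Suc n \<longrightarrow>
      f (x3 a b c) = (f a \<noteq> (f b \<noteq> f c))" and l: "length a = n" "length b = n" "length c = n"
    show "f (False # x3 a b c) = (f (False # a) \<noteq> (f (False # b) \<noteq> f (False # c)))"
      using H[rule_format, of "False#a" "False#b" "False#c"] l by simp
  qed
  then obtain c0 as0 where a0: "length as0 = n"
    "\<forall>x. length x = n \<longrightarrow> f0 x = (c0 \<noteq> xsum (map2 (\<and>) as0 x))"
    using Suc.IH unfolding affine_def by blast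
  define z where "z = replicate n False"
  define k where "k = (f (True # z) \<noteq> f0 z)"
  have f1: "f (True # xs) = (k \<noteq> f0 xs)" if "length xs = n" for xs
  proof -
    have "f (x3 (True#z) (False#xs) (False#z)) = (f (True#z) \<noteq> (f (False#xs) \<noteq> f (False#z)))"
      using Suc.prems that unfolding Q_def z_def
      by (intro Suc.prems[unfolded Q_def, rule_format]) auto
    moreover have "x3 (True#z) (False#xs) (False#z) = True # xs"
      using x3_zero[OF that] by (simp add: z_def)
    ultimately have "f (True # xs) = (f (True#z) \<noteq> (f (False#xs) \<noteq> f (False#z)))" by simp
    then show ?thesis unfolding k_def f0_def by argo
  qed
  have fz: "f0 z = c0" using a0 S_zero unfolding z_def by simp
  show ?case unfolding affine_def
  proof (rule exI[of _ c0], rule exI[of _ "k # as0"], intro conjI allI impI)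
    show "length (k # as0) = Suc n" using a0 by simp
  next
    fix x :: "bool list" assume "length x = Suc n"
    then obtain b xs where x: "x = b # xs" "length xs = n" by (cases x) auto
    show "f x = (c0 \<noteq> xsum (map2 (\<and>) (k # as0) x))"
    proof (cases b)
      case True
      have "f x = (k \<noteq> f0 xs)" using x f1 True by simp
      also have "f0 xs = (c0 \<noteq> xsum (map2 (\<and>) as0 xs))" using a0 x by blast
      finally show ?thesis using x True by (cases k; cases c0; simp add: xsum_Cons xsum_Nil)
    next
      case False
      have "f x = f0 xs" using x False by (simp add: f0_def)
      also have "f0 xs = (c0 \<noteq> xsum (map2 (\<and>) as0 xs))" using a0 x by blast
      finally show ?thesis using x False by (cases k; cases c0; simp add: xsum_Cons xsum_Nil)
    qed
  qed
qed

theorem mainTheorem10: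
  shows "\<forall>n f. (AP R5 R5 n f \<longleftrightarrow> affine n f) \<and> (Pol R5 (completion R5) n f \<longleftrightarrow> affine n f)"
proof (intro allI conjI)
  fix n f
  show "AP R5 R5 n f \<longleftrightarrow> affine n f" unfolding AP_Q using Q_aff aff_Q by blast
  show "Pol R5 (completion R5) n f \<longleftrightarrow> affine n f" unfolding compl Pol_Q using Q_aff aff_Q by blast
qed

end
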